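(* Let $X$ be a real normed linear space and let $\Omega_1,\Omega_2\subset X$ be nonempty convex sets such that $\operatorname{int}\Omega_1\neq\emptyset$ and $(\operatorname{int}\Omega_1)\cap\Omega_2=\emptyset$. Then $\Omega_1$ and $\Omega_2$ form an extremal system. Furthermore, $\operatorname{int}(\Omega_1-\Omega_2)\neq\emptyset$.
   Context: Two nonempty sets $\Omega_1,\Omega_2\subset X$ form an extremal system if for every $\varepsilon>0$ there exists $a\in X$ with $\|a\|\le\varepsilon$ and $(\Omega_1+a)\cap\Omega_2=\emptyset$. $\Omega_1-\Omega_2=\{x-y\mid x\in\Omega_1,\ y\in\Omega_2\}$, and $\operatorname{int}$ denotes the topological interior. *)

theory Defs
  imports "HOL-Analysis.Analysis"
begin

definition extremal_system :: "'a::real_normed_vector set \<Rightarrow> 'a set \<Rightarrow> bool" where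
  "extremal_system \<Omega>1 \<Omega>2 \<longleftrightarrow>
     (\<forall>\<epsilon>>0. \<exists>a. norm a \<le> \<epsilon> \<and> ((\<lambda>x. x + a) ` \<Omega>1) \<inter> \<Omega>2 = {})"

definition set_minus :: "'a::real_normed_vector set \<Rightarrow> 'a set \<Rightarrow> 'a set" where
  "set_minus A B = {x - y | x y. x \<in> A \<and> y \<in> B}"

end

theory Submission
  imports Defs
begin

lemma shrink_interior:
  fixes S :: "'a::real_normed_vector set"
  assumes "convex S" "ball c r \<subseteq> S" "r > 0" "x \<in> S" "0 < l" "l \<le> 1"
  shows "(1 - l) *\<^sub>R x + l *\<^sub>R c \<in> interior S"
proof -
  let ?p = "(1 - l) *\<^sub>R x + l *\<^sub>R c"
  have "ball ?p (l * r) \<subseteq> S"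
  proof
    fix z assume z: "z \<in> ball ?p (l * r)"
    define w where "w = (1 / l) *\<^sub>R (z - (1 - l) *\<^sub>R x)"
    have zw: "z = (1 - l) *\<^sub>R x + l *\<^sub>R w"
      using assms(5) by (simp add: w_def)
    have "w - c = (1 / l) *\<^sub>R (z - ?p)"
      using assms(5) by (simp add: w_def algebra_simps)
    hence "norm (w - c) = norm (z - ?p) / l" using assms(5) by simp
    also have "\<dots> < r" using z assms(5) by (simp add: dist_norm norm_minus_commute field_simps mult.commute)
    finally have "w \<in> S" using assms(2) by (auto simp: dist_norm norm_minus_commute)
    then show "z \<in> S" unfolding zw using assms(1,4,5,6) convexD by (metis diff_add_cancel diff_ge_0_iff_ge less_eq_real_def)
  qed
  moreover have "l * r > 0" using assms by simp
  ultimately show ?thesis by (meson centre_in_ball interior_maximal open_ball subsetD)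
qed

theorem corollary2p3:
  fixes \<Omega>1 \<Omega>2 :: "'a::real_normed_vector set"
  assumes "\<Omega>1 \<noteq> {}" and "\<Omega>2 \<noteq> {}"
    and "convex \<Omega>1" and "convex \<Omega>2"
    and "interior \<Omega>1 \<noteq> {}"
    and "interior \<Omega>1 \<inter> \<Omega>2 = {}"
  shows "extremal_system \<Omega>1 \<Omega>2 \<and> interior (set_minus \<Omega>1 \<Omega>2) \<noteq> {}"
proof
  obtain x0 where x0: "x0 \<in> interior \<Omega>1" using assms(5) by blast
  then obtain r where r: "r > 0" "ball x0 r \<subseteq> \<Omega>1" using mem_interior by blast
  obtain y0 where y0: "y0 \<in> \<Omega>2" using assms(2) by blast
  show "extremal_system \<Omega>1 \<Omega>2"
    unfolding extremal_system_def
  proof (intro allI impI)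
    fix e :: real assume e: "e > 0"
    define l where "l = min (1/2) (e / (2 * (norm (x0 - y0) + 1)))"
    have "norm (x0 - y0) + 1 > 0" by (simp add: add_nonneg_pos)
    hence l: "0 < l" "l \<le> 1/2" using e unfolding l_def by (auto intro!: divide_pos_pos simp: min_def)
    define a where "a = (l / (1 - l)) *\<^sub>R (x0 - y0)"
    have "norm a = (l / (1 - l)) * norm (x0 - y0)" using l by (simp add: a_def)
    also have "\<dots> \<le> 2 * l * norm (x0 - y0)"
      using l by (intro mult_right_mono) (auto simp: field_simps)
    also have "\<dots> \<le> 2 * (e / (2 * (norm (x0 - y0) + 1))) * (norm (x0 - y0) + 1)"
      using e \<open>norm (x0 - y0) + 1 > 0\<close> by (intro mult_mono) (auto simp: l_def add_nonneg_pos)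
    also have "\<dots> = e" by (simp add: field_simps add_nonneg_eq_0_iff)
    finally have na: "norm a \<le> e" .
    have "(\<lambda>x. x + a) ` \<Omega>1 \<inter> \<Omega>2 = {}"
    proof (rule ccontr)
      assume "(\<lambda>x. x + a) ` \<Omega>1 \<inter> \<Omega>2 \<noteq> {}"
      then obtain x where x: "x \<in> \<Omega>1" "x + a \<in> \<Omega>2" by blast
      have "(1 - l) *\<^sub>R (x + a) + l *\<^sub>R y0 \<in> \<Omega>2"
        using convexD[OF assms(4) x(2) y0, of "1-l" l] l by simp
      moreover have "(1 - l) *\<^sub>R (x + a) + l *\<^sub>R y0 = (1 - l) *\<^sub>R x + l *\<^sub>R x0"
      proof -
        have "(1 - l) * (l / (1 - l)) = l" using l by simp
        hence "(1 - l) *\<^sub>R a = l *\<^sub>R (x0 - y0)" by (simp add: a_def)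
        thus ?thesis by (simp add: algebra_simps scaleR_add_right)
      qed
      moreover have "(1 - l) *\<^sub>R x + l *\<^sub>R x0 \<in> interior \<Omega>1"
        using shrink_interior[OF assms(3) r(2) r(1) x(1)] l by simp
      ultimately show False using assms(6) by auto
    qed
    then show "\<exists>a. norm a \<le> e \<and> (\<lambda>x. x + a) ` \<Omega>1 \<inter> \<Omega>2 = {}" using na by blast
  qed
  have "ball (x0 - y0) r \<subseteq> set_minus \<Omega>1 \<Omega>2"
  proof
    fix z assume z: "z \<in> ball (x0 - y0) r"
    have "z + y0 \<in> ball x0 r" using z by (simp add: dist_norm algebra_simps)
    hence "z + y0 \<in> \<Omega>1" using r by blast
    then show "z \<in> set_minus \<Omega>1 \<Omega>2" unfolding set_minus_def using y0
      by (metis (mono_tags, lifting) add_diff_cancel mem_Collect_eq)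
  qed
  hence "x0 - y0 \<in> interior (set_minus \<Omega>1 \<Omega>2)"
    using r(1) by (meson centre_in_ball interior_maximal open_ball subsetD)
  then show "interior (set_minus \<Omega>1 \<Omega>2) \<noteq> {}" by blast
qed

end
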